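(* Let $S$ be a right LCM monoid with property (AR) such that $S=S_{ci}^1S_c$, i.e. every $s\in S$ can be written as $s=tr$ with $t\in S_{ci}\cup\{1\}$ and $r\in S_c$. Let $\pi_p\colon C^*(S)\to\mathcal{Q}_p(S)$ and $\pi_c\colon C^*(S)\to\mathcal{Q}_c(S)$ be the quotient maps. Then $\mathcal{Q}(S)$ is (canonically isomorphic to) the quotient of $\mathcal{Q}_p(S)$ by the relations $\pi_p(v_sv_s^* )=1$ for all $s\in S_c$. Equivalently, $\mathcal{Q}(S)$ is the quotient of $\mathcal{Q}_c(S)$ by the relations $\sum_{f\in F}\pi_c(e_{fS})=1$ for all accurate proper foundation sets $F$ for $S$. In particular, these conclusions hold if the relation $\to$ on $S$ defined by $s\to t :\Leftrightarrow s\in t(S_c\setminus S^* )$ is terminating, i.e. there is no infinite sequence $(s_n)_{n\geq1}$ in $S$ with $s_n\to s_{n+1}$ and $s_n\neq s_{n+1}$ for all $n$.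
   Context: A right LCM monoid is a countable discrete monoid $S$ that is left cancellative and such that for all $s,t\in S$ the intersection $sS\cap tS$ is either empty or equal to $rS$ for some $r\in S$; $S^*$ denotes its group of units. A finite subset $F\subset S$ is a foundation set if for every $t\in S$ there is $s\in F$ with $sS\cap tS\neq\emptyset$; it is accurate if $fS\cap f'S=\emptyset$ for distinct $f,f'\in F$. $S$ has property (AR) if every foundation set $F$ admits an accurate foundation set $F'$ refining it (for each $f'\in F'$ there is $f\in F$ with $f'\in fS$). The core subsemigroup is $S_c=\{s\in S\mid sS\cap tS\neq\emptyset\text{ for all }t\in S\}$. An element $s\in S\setminus S_c$ is core irreducible if whenever $s=tr$ with $t\in S$, $r\in S_c$, then $r\in S^*$; $S_{ci}$ is the set of core irreducible elements and $S_{ci}^1=S_{ci}\cup\{1\}$. A foundation set is proper if it is contained in $S_{ci}$. The full semigroup $C^*$-algebra $C^*(S)$ (Li) is the universal $C^*$-algebra generated by isometries $\{v_s: s\in S\}$ and projections $\{e_X : X\in\mathcal{J}(S)\}$, $\mathcal{J}(S)=\{\emptyset\}\cup\{sS: s\in S\}$, subject to $v_{st}=v_sv_t$, $v_se_Xv_s^*=e_{sX}$, $e_S=1$, $e_\emptyset=0$, $e_Xe_Y=e_{X\cap Y}$; so $e_{sS}=v_sv_s^*$. The boundary quotient $\mathcal{Q}(S)$ is the quotient of $C^*(S)$ by $\prod_{f\in F}(1-e_{fS})=0$ for all foundation sets $F$ (under (AR) equivalently by $\sum_{f\in F}e_{fS}=1$ for all accurate foundation sets $F$). The core boundary quotient $\mathcal{Q}_c(S)$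 is the quotient of $C^*(S)$ by $v_sv_s^*=1$ for all $s\in S_c$. The proper boundary quotient $\mathcal{Q}_p(S)$ is the quotient of $C^*(S)$ by $\sum_{f\in F}e_{fS}=1$ for all accurate proper foundation sets $F$. *)

theory Defs
  imports Complex_Main "HOL-Library.Countable"
begin

class cstar_algebra = real_normed_algebra_1 + banach +
  fixes cscale :: "complex \<Rightarrow> 'a \<Rightarrow> 'a"
    and adj :: "'a \<Rightarrow> 'a"
  assumes cscale_add_left: "cscale (a + b) x = cscale a x + cscale b x"
    and cscale_add_right: "cscale a (x + y) = cscale a x + cscale a y"
    and cscale_cscale: "cscale a (cscale b x) = cscale (a * b) x"
    and cscale_of_real: "cscale (of_real r) x = scaleR r x"
    and cscale_mult_left: "cscale a (x * y) = cscale a x * y"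
    and cscale_mult_right: "cscale a (x * y) = x * cscale a y"
    and norm_cscale: "norm (cscale a x) = cmod a * norm x"
    and adj_add: "adj (x + y) = adj x + adj y"
    and adj_cscale: "adj (cscale a x) = cscale (cnj a) (adj x)"
    and adj_mult: "adj (x * y) = adj y * adj x"
    and adj_adj: "adj (adj x) = x"
    and cstar_identity: "norm (adj x * x) = norm x * norm x"

definition rideal :: "'m::monoid_mult \<Rightarrow> 'm set" where
  "rideal s = {s * t | t. True}"

definition left_cancellative :: "'m::monoid_mult itself \<Rightarrow> bool" where
  "left_cancellative _ \<longleftrightarrow> (\<forall>(s::'m) t u. s * t = s * u \<longrightarrow> t = u)"

definition right_LCM :: "'m::{monoid_mult,countable} itself \<Rightarrow> bool" where
  "right_LCM T \<longleftrightarrow> left_cancellative T \<and>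
     (\<forall>(s::'m) t. rideal s \<inter> rideal t = {} \<or> (\<exists>r. rideal s \<inter> rideal t = rideal r))"

definition units_of_monoid :: "'m::monoid_mult set" where
  "units_of_monoid = {u. \<exists>w. u * w = 1 \<and> w * u = 1}"

definition foundation_set :: "'m::monoid_mult set \<Rightarrow> bool" where
  "foundation_set F \<longleftrightarrow> finite F \<and> (\<forall>t. \<exists>s\<in>F. rideal s \<inter> rideal t \<noteq> {})"

definition accurate :: "'m::monoid_mult set \<Rightarrow> bool" where
  "accurate F \<longleftrightarrow> (\<forall>f\<in>F. \<forall>f'\<in>F. f \<noteq> f' \<longrightarrow> rideal f \<inter> rideal f' = {})"

definition refines :: "'m::monoid_mult set \<Rightarrow> 'm set \<Rightarrow> bool" where
  "refines F' F \<longleftrightarrow> (\<forall>f'\<in>F'. \<exists>f\<in>F. f' \<in> rideal f)"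

definition property_AR :: "'m::monoid_mult itself \<Rightarrow> bool" where
  "property_AR _ \<longleftrightarrow> (\<forall>F::'m set. foundation_set F \<longrightarrow>
      (\<exists>F'. foundation_set F' \<and> accurate F' \<and> refines F' F))"

definition core :: "'m::monoid_mult set" where
  "core = {s. \<forall>t. rideal s \<inter> rideal t \<noteq> {}}"

definition core_irreducible :: "'m::monoid_mult set" where
  "core_irreducible = {s. s \<notin> core \<and>
      (\<forall>t r. s = t * r \<and> r \<in> core \<longrightarrow> r \<in> units_of_monoid)}"

definition proper_foundation_set :: "'m::monoid_mult set \<Rightarrow> bool" where
  "proper_foundation_set F \<longleftrightarrow> foundation_set F \<and> F \<subseteq> core_irreducible"

definition ci_core_decomposition :: "'m::monoid_mult itself \<Rightarrow> bool" where
  "ci_core_decomposition _ \<longleftrightarrow> (\<forall>s::'m. \<exists>t r. (t \<in> core_irreducible \<or> t = 1) \<and> r \<in> core \<and> s = t * r)"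

definition core_arrow :: "'m::monoid_mult \<Rightarrow> 'm \<Rightarrow> bool" where
  "core_arrow s t \<longleftrightarrow> (\<exists>r \<in> core - units_of_monoid. s = t * r)"

definition core_arrow_terminating :: "'m::monoid_mult itself \<Rightarrow> bool" where
  "core_arrow_terminating _ \<longleftrightarrow>
     \<not> (\<exists>x :: nat \<Rightarrow> 'm. \<forall>n. core_arrow (x n) (x (Suc n)) \<and> x n \<noteq> x (Suc n))"

definition constructible_ideals :: "'m::monoid_mult set set" where
  "constructible_ideals = insert {} (range rideal)"

text \<open>A family of elements of a unital C*-algebra satisfying the defining relations of
the full semigroup C*-algebra C*(S); representations of C*(S) (unital *-homomorphisms
out of C*(S)) correspond exactly to such families.\<close>
definition li_family :: "('m::monoid_mult \<Rightarrow> 'a::cstar_algebra) \<Rightarrow> ('m set \<Rightarrow> 'a) \<Rightarrow> bool" where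
  "li_family v e \<longleftrightarrow>
     (\<forall>s. adj (v s) * v s = 1) \<and>
     (\<forall>X\<in>constructible_ideals. adj (e X) = e X \<and> e X * e X = e X) \<and>
     (\<forall>s t. v (s * t) = v s * v t) \<and>
     (\<forall>s. \<forall>X\<in>constructible_ideals. v s * e X * adj (v s) = e ((*) s ` X)) \<and>
     e UNIV = 1 \<and> e {} = 0 \<and>
     (\<forall>X\<in>constructible_ideals. \<forall>Y\<in>constructible_ideals. e X * e Y = e (X \<inter> Y))"

text \<open>Boundary relations: $\prod_{f\in F}(1-e_{fS}) = 0$ for all foundation sets $F$
(the product, of commuting projections, taken along any enumeration of $F$).\<close>
definition boundary_relations :: "('m::monoid_mult set \<Rightarrow> 'a::cstar_algebra) \<Rightarrow> bool" where
  "boundary_relations e \<longleftrightarrow> (\<forall>F. foundation_set F \<longrightarrow>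
     (\<forall>xs. set xs = F \<longrightarrow> prod_list (map (\<lambda>f. 1 - e (rideal f)) xs) = 0))"

definition proper_boundary_relations :: "('m::monoid_mult set \<Rightarrow> 'a::cstar_algebra) \<Rightarrow> bool" where
  "proper_boundary_relations e \<longleftrightarrow> (\<forall>F. proper_foundation_set F \<and> accurate F \<longrightarrow>
     (\<Sum>f\<in>F. e (rideal f)) = 1)"

definition core_relations :: "('m::monoid_mult \<Rightarrow> 'a::cstar_algebra) \<Rightarrow> bool" where
  "core_relations v \<longleftrightarrow> (\<forall>s\<in>core. v s * adj (v s) = 1)"

end

theory Submission
  imports Defs
begin

lemma rideal_iff: "x \<in> rideal s \<longleftrightarrow> (\<exists>t. x = s * t)"
  by (auto simp: rideal_def)

lemma rideal_self: "s \<in> rideal s"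
  by (metis mult.right_neutral rideal_iff)

lemma image_UNIV_rideal: "(*) s ` UNIV = rideal s"
  by (auto simp: rideal_def)

lemma rideal_sub: "g \<in> rideal f \<Longrightarrow> rideal g \<subseteq> rideal f"
  by (auto simp: rideal_iff mult.assoc)

lemma rideal_one: "rideal 1 = UNIV"
  by (auto simp: rideal_iff)

lemma one_core: "1 \<in> core"
  using rideal_self by (auto simp: core_def rideal_one)

lemma core_meet:
  assumes "c \<in> core" shows "rideal (a*c) \<inter> rideal (a*x) \<noteq> {}"
proof -
  from assms obtain y where "y \<in> rideal c" "y \<in> rideal x" by (auto simp: core_def)
  then obtain p q where "y = c * p" "y = x * q" by (meson rideal_iff)
  then have "a*y \<in> rideal (a*c)" "a*y \<in> rideal (a*x)"
    by (auto simp: rideal_iff mult.assoc[symmetric]) (metis mult.assoc)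
  then show ?thesis by blast
qed

lemma core_mult:
  assumes "a \<in> core" "b \<in> core" shows "a * b \<in> core"
  unfolding core_def
proof (intro CollectI allI)
  fix x
  from assms(1) obtain y where "y \<in> rideal a" "y \<in> rideal x" by (auto simp: core_def)
  then obtain p q where y: "y = a * p" "y = x * q" by (meson rideal_iff)
  from core_meet[OF assms(2), of a p] obtain z where "z \<in> rideal (a*b)" "z \<in> rideal (a*p)" by blast
  then have "z \<in> rideal x" using y rideal_sub by (metis rideal_iff subsetD)
  then show "rideal (a * b) \<inter> rideal x \<noteq> {}" using \<open>z \<in> rideal (a*b)\<close> by blast
qed

lemma decomp_meet:
  assumes "c \<in> core" "c' \<in> core" "rideal t \<inter> rideal t' \<noteq> {}"
  shows "rideal (t*c) \<inter> rideal (t'*c') \<noteq> {}"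
proof -
  from assms(3) obtain p a a' where p: "p = t*a" "p = t'*a'" by (metis disjoint_iff rideal_iff)
  from core_meet[OF assms(1), of t a] obtain q where q: "q \<in> rideal (t*c)" "q \<in> rideal p"
    using p by blast
  then obtain b where b: "q = p * b" by (auto simp: rideal_iff)
  then have "q = t' * (a' * b)" using p by (metis mult.assoc)
  from core_meet[OF assms(2), of t' "a'*b"] obtain z where z: "z \<in> rideal (t'*c')" "z \<in> rideal q"
    using \<open>q = t' * (a' * b)\<close> by blast
  have "z \<in> rideal (t*c)" using z(2) q(1) rideal_sub by blast
  then show ?thesis using z(1) by blast
qed

lemma terminating_decomp:
  fixes T :: "'m::monoid_mult itself"
  assumes lc: "left_cancellative T" and trm: "core_arrow_terminating T"
  shows "ci_core_decomposition T"
proof (rule ccontr)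
  define B where "B = {s::'m. \<not>(\<exists>t r. (t \<in> core_irreducible \<or> t = 1) \<and> r \<in> core \<and> s = t*r)}"
  assume "\<not> ci_core_decomposition T"
  then obtain s0 where s0: "s0 \<in> B" unfolding ci_core_decomposition_def B_def by blast
  have step: "\<exists>t\<in>B. core_arrow s t \<and> s \<noteq> t" if sB: "s \<in> B" for s
  proof -
    have "s \<notin> core_irreducible" using sB one_core unfolding B_def by force
    moreover have "s \<notin> core" using sB unfolding B_def by force
    ultimately obtain t r where tr: "s = t * r" "r \<in> core" "r \<notin> units_of_monoid"
      unfolding core_irreducible_def by blast
    have "t \<in> B"
    proof (rule ccontr)
      assume "t \<notin> B"
      then obtain t' r' where "(t' \<in> core_irreducible \<or> t' = 1)" "r' \<in> core" "t = t'*r'"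
        unfolding B_def by blast
      then have "(t' \<in> core_irreducible \<or> t' = 1) \<and> r'*r \<in> core \<and> s = t'*(r'*r)"
        using tr core_mult by (metis mult.assoc)
      then show False using sB unfolding B_def by blast
    qed
    moreover have "core_arrow s t" using tr unfolding core_arrow_def by blast
    moreover have "s \<noteq> t"
    proof
      assume "s = t"
      then have "t * r = t * 1" using tr by simp
      then have "r = 1" using lc unfolding left_cancellative_def by blast
      then show False using tr(3) unfolding units_of_monoid_def by simp
    qed
    ultimately show ?thesis by blast
  qed
  define g where "g s = (SOME t. t \<in> B \<and> core_arrow s t \<and> s \<noteq> t)" for s
  have g: "g s \<in> B \<and> core_arrow s (g s) \<and> s \<noteq> g s" if "s \<in> B" for s
    unfolding g_def using step[OF that] by (metis (mono_tags, lifting) someI_ex)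
  define x where "x n = (g ^^ n) s0" for n
  have xB: "x n \<in> B" for n
    by (induction n) (auto simp: x_def s0 g)
  have "\<forall>n. core_arrow (x n) (x (Suc n)) \<and> x n \<noteq> x (Suc n)"
    using g[OF xB] by (simp add: x_def)
  then show False using trm unfolding core_arrow_terminating_def by blast
qed

lemma rideal_ci: "rideal s \<in> constructible_ideals"
  by (simp add: constructible_ideals_def)

lemma empty_ci: "{} \<in> constructible_ideals"
  by (simp add: constructible_ideals_def)

lemma li_P:
  fixes v :: "'m::monoid_mult \<Rightarrow> 'a::cstar_algebra"
  assumes "li_family v e" shows "e (rideal s) = v s * adj (v s)"
proof -
  have "v s * e UNIV * adj (v s) = e ((*) s ` UNIV)"
    using assms rideal_ci[of "1::'m"] unfolding li_family_def rideal_one by metis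
  then show ?thesis using assms unfolding li_family_def image_UNIV_rideal by simp
qed

lemma li_mult:
  fixes v :: "'m::monoid_mult \<Rightarrow> 'a::cstar_algebra"
  assumes "li_family v e" shows "e (rideal f) * e (rideal g) = e (rideal f \<inter> rideal g)"
  using assms rideal_ci unfolding li_family_def by blast

lemma li_comm:
  fixes v :: "'m::monoid_mult \<Rightarrow> 'a::cstar_algebra"
  assumes "li_family v e" shows "e (rideal f) * e (rideal g) = e (rideal g) * e (rideal f)"
  using li_mult[OF assms] by (metis Int_commute)

lemma li_disj:
  fixes v :: "'m::monoid_mult \<Rightarrow> 'a::cstar_algebra"
  assumes "li_family v e" "rideal f \<inter> rideal g = {}" shows "e (rideal f) * e (rideal g) = 0"
  using li_mult[OF assms(1)] assms(2) assms(1) unfolding li_family_def by simp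

lemma li_sub:
  fixes v :: "'m::monoid_mult \<Rightarrow> 'a::cstar_algebra"
  assumes "li_family v e" "g \<in> rideal f" shows "e (rideal f) * e (rideal g) = e (rideal g)"
  using li_mult[OF assms(1)] rideal_sub[OF assms(2)] by (metis Int_absorb1)

lemma li_core:
  fixes v :: "'m::monoid_mult \<Rightarrow> 'a::cstar_algebra"
  assumes "li_family v e" "core_relations v" "r \<in> core"
  shows "e (rideal (t * r)) = e (rideal t)"
proof -
  have m: "v (t*r) = v t * v r" using assms(1) unfolding li_family_def by blast
  have "v r * adj (v r) = 1" using assms(2,3) unfolding core_relations_def by blast
  then have "v (t*r) * adj (v (t*r)) = v t * adj (v t)"
    unfolding m adj_mult by (metis mult.assoc mult.right_neutral)
  then show ?thesis using li_P[OF assms(1)] by metis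
qed

lemma li_commute_prod:
  fixes v :: "'m::monoid_mult \<Rightarrow> 'a::cstar_algebra"
  assumes "li_family v e"
  shows "e (rideal g) * prod_list (map (\<lambda>f. 1 - e (rideal f)) xs)
       = prod_list (map (\<lambda>f. 1 - e (rideal f)) xs) * e (rideal g)"
proof (induction xs)
  case Nil then show ?case by simp
next
  case (Cons a xs)
  have c: "e (rideal g) * (1 - e (rideal a)) = (1 - e (rideal a)) * e (rideal g)"
    using li_comm[OF assms, of g a] by (simp add: algebra_simps)
  show ?case using Cons c by (simp add: mult.assoc[symmetric]) (metis mult.assoc)
qed

lemma li_prod_zero:
  fixes v :: "'m::monoid_mult \<Rightarrow> 'a::cstar_algebra"
  assumes "li_family v e" "f \<in> set xs" "g \<in> rideal f"
  shows "prod_list (map (\<lambda>f. 1 - e (rideal f)) xs) * e (rideal g) = 0"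
  using assms(2)
proof (induction xs)
  case Nil then show ?case by simp
next
  case (Cons a xs)
  show ?case
  proof (cases "f \<in> set xs")
    case True
    then show ?thesis using Cons by (simp add: mult.assoc)
  next
    case False
    then have "a = f" using Cons by simp
    then have "(1 - e (rideal a)) * e (rideal g) = 0"
      using li_sub[OF assms(1,3)] by (simp add: algebra_simps)
    then show ?thesis using li_commute_prod[OF assms(1), of g xs]
      by (simp add: mult.assoc) (metis mult.assoc mult_zero_left)
  qed
qed

lemma li_prod_disjoint:
  fixes v :: "'m::monoid_mult \<Rightarrow> 'a::cstar_algebra"
  assumes "li_family v e" "distinct xs" "accurate (set xs)"
  shows "prod_list (map (\<lambda>f. 1 - e (rideal f)) xs) = 1 - (\<Sum>f\<in>set xs. e (rideal f))"
  using assms(2,3)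
proof (induction xs)
  case Nil then show ?case by simp
next
  case (Cons a xs)
  have acc: "accurate (set xs)" using Cons.prems unfolding accurate_def by simp
  have z: "e (rideal a) * e (rideal b) = 0" if "b \<in> set xs" for b
    using Cons.prems that li_disj[OF assms(1)] unfolding accurate_def by (metis distinct.simps(2) list.set_intros(1,2))
  have "e (rideal a) * (\<Sum>f\<in>set xs. e (rideal f)) = 0"
    by (simp add: sum_distrib_left z)
  note h1 = this
  moreover have h2: "prod_list (map (\<lambda>f. 1 - e (rideal f)) xs) = 1 - (\<Sum>f\<in>set xs. e (rideal f))"
    using Cons acc by simp
  ultimately have "prod_list (map (\<lambda>f. 1 - e (rideal f)) (a#xs)) = 1 - (e (rideal a) + (\<Sum>f\<in>set xs. e (rideal f)))"
  proof -
    have "\<And>P S p::'a. P * S = 0 \<Longrightarrow> p = 1 - S \<Longrightarrow> (1 - P) * p = 1 - (P + S)"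
    proof -
      fix P S p :: 'a
      assume h: "P * S = 0" "p = 1 - S"
      have "(1 - P) * p = (1 - P) * (1 - S)" using h by simp
      also have "\<dots> = 1 - S - P + P * S" by (simp add: algebra_simps)
      also have "\<dots> = 1 - (P + S)" using h by (simp add: algebra_simps)
      finally show "(1 - P) * p = 1 - (P + S)" .
    qed
    then show ?thesis using h1 h2 by simp
  qed
  then show ?case using Cons.prems by simp
qed

lemma li_accurate_sum:
  fixes v :: "'m::monoid_mult \<Rightarrow> 'a::cstar_algebra" and T :: "'m itself"
  assumes li: "li_family v e" and dec: "ci_core_decomposition T"
    and pb: "proper_boundary_relations e" and cr: "core_relations v"
    and F: "foundation_set F" "accurate F"
  shows "(\<Sum>f\<in>F. e (rideal f)) = 1"
proof -
  from dec have "\<forall>s::'m. \<exists>p. (fst p \<in> core_irreducible \<or> fst p = 1) \<and> snd p \<in> core \<and> s = fst p * snd p"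
    unfolding ci_core_decomposition_def by auto
  then have "\<exists>d. \<forall>s::'m. (fst (d s) \<in> core_irreducible \<or> fst (d s) = 1) \<and> snd (d s) \<in> core \<and> s = fst (d s) * snd (d s)"
    by (rule choice)
  then obtain d :: "'m \<Rightarrow> 'm \<times> 'm" where d: "\<And>s. (fst (d s) \<in> core_irreducible \<or> fst (d s) = 1) \<and> snd (d s) \<in> core \<and> s = fst (d s) * snd (d s)"
    by blast
  define tt where "tt s = fst (d s)" for s
  define rr where "rr s = snd (d s)" for s
  have d': "(tt s \<in> core_irreducible \<or> tt s = 1)" "rr s \<in> core" "tt s * rr s = s" for s
    using d[of s] unfolding tt_def rr_def by auto
  have Pe: "e (rideal f) = e (rideal (tt f))" for f
    using li_core[OF li cr d'(2)[of f], of "tt f"] unfolding d'(3)[of f] .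
  have key: "f = f'" if "f \<in> F" "f' \<in> F" "rideal (tt f) \<inter> rideal (tt f') \<noteq> {}" for f f'
  proof (rule ccontr)
    assume "f \<noteq> f'"
    then have "rideal f \<inter> rideal f' = {}" using F(2) that unfolding accurate_def by blast
    moreover have "rideal (tt f * rr f) \<inter> rideal (tt f' * rr f') \<noteq> {}"
      using decomp_meet[OF d'(2) d'(2) that(3)] .
    ultimately show False unfolding d'(3) by blast
  qed
  show ?thesis
  proof (cases "\<exists>f\<in>F. tt f = 1")
    case True
    then obtain f where f: "f \<in> F" "tt f = 1" by blast
    have "F = {f}"
    proof
      show "{f} \<subseteq> F" using f by simp
      show "F \<subseteq> {f}"
      proof
        fix f' assume "f' \<in> F"
        moreover have "tt f' \<in> rideal (tt f) \<inter> rideal (tt f')"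
          using f(2) rideal_self[of "tt f'"] by (simp add: rideal_one)
        then have "rideal (tt f) \<inter> rideal (tt f') \<noteq> {}" by blast
        ultimately show "f' \<in> {f}" using key f(1) by blast
      qed
    qed
    moreover have "e (rideal f) = 1"
      using Pe[of f] f(2) li unfolding li_family_def by (simp add: rideal_one)
    ultimately show ?thesis by simp
  next
    case False
    then have ci: "tt ` F \<subseteq> core_irreducible" using d'(1) by auto
    have inj: "inj_on tt F"
      unfolding inj_on_def
    proof (intro ballI impI)
      fix f f' assume h: "f \<in> F" "f' \<in> F" "tt f = tt f'"
      have "tt f \<in> rideal (tt f) \<inter> rideal (tt f')" using rideal_self h(3) by simp
      then show "f = f'" using key h(1,2) by blast
    qed
    have fin: "finite (tt ` F)" using F(1) unfolding foundation_set_def by simp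
    have fs: "foundation_set (tt ` F)"
      unfolding foundation_set_def
    proof (intro conjI fin allI)
      fix t
      obtain f where "f \<in> F" "rideal f \<inter> rideal t \<noteq> {}" using F(1) unfolding foundation_set_def by blast
      moreover have "f \<in> rideal (tt f)" unfolding rideal_iff using d'(3)[of f] by metis
      then have "rideal f \<subseteq> rideal (tt f)" by (rule rideal_sub)
      ultimately show "\<exists>s\<in>tt ` F. rideal s \<inter> rideal t \<noteq> {}" by blast
    qed
    have acc: "accurate (tt ` F)"
      unfolding accurate_def using key by blast
    have "(\<Sum>g\<in>tt ` F. e (rideal g)) = 1"
      using pb fs acc ci unfolding proper_boundary_relations_def proper_foundation_set_def by blast
    then show ?thesis using Pe by (simp add: sum.reindex[OF inj])
  qed
qed

theorem proposition2p10:
  fixes T :: "'m::{monoid_mult,countable} itself"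
  assumes "right_LCM T"
    and "property_AR T"
    and "ci_core_decomposition T \<or> core_arrow_terminating T"
  shows "\<forall>(v :: 'm \<Rightarrow> 'a::cstar_algebra) (e :: 'm set \<Rightarrow> 'a). li_family v e \<longrightarrow>
           (boundary_relations e \<longleftrightarrow> proper_boundary_relations e \<and> core_relations v)"
proof (intro allI impI)
  fix v :: "'m \<Rightarrow> 'a" and e :: "'m set \<Rightarrow> 'a"
  assume li: "li_family v e"
  have dec: "ci_core_decomposition T"
    using assms(3) terminating_decomp[of T] assms(1) unfolding right_LCM_def by blast
  show "boundary_relations e \<longleftrightarrow> proper_boundary_relations e \<and> core_relations v"
  proof
    assume br: "boundary_relations e"
    have "core_relations v"
      unfolding core_relations_def
    proof
      fix s :: 'm assume "s \<in> core"
      then have "foundation_set {s}" unfolding foundation_set_def core_def by simp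
      moreover have "set [s] = {s}" by simp
      ultimately have "prod_list (map (\<lambda>f. 1 - e (rideal f)) [s]) = 0"
        using br unfolding boundary_relations_def by blast
      then have "e (rideal s) = 1" by simp
      then show "v s * adj (v s) = 1" using li_P[OF li, of s] by simp
    qed
    moreover have "proper_boundary_relations e"
      unfolding proper_boundary_relations_def
    proof (intro allI impI)
      fix F :: "'m set" assume "proper_foundation_set F \<and> accurate F"
      then have F: "foundation_set F" "accurate F" unfolding proper_foundation_set_def by auto
      have "finite F" using F(1) unfolding foundation_set_def by simp
      then obtain xs where xs: "set xs = F" "distinct xs"
        using finite_distinct_list by blast
      have "prod_list (map (\<lambda>f. 1 - e (rideal f)) xs) = 0"
        using br F xs unfolding boundary_relations_def by blast
      moreover have "prod_list (map (\<lambda>f. 1 - e (rideal f)) xs) = 1 - (\<Sum>f\<in>set xs. e (rideal f))"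
        using li_prod_disjoint[OF li xs(2)] F(2) xs(1) by blast
      ultimately have "1 - (\<Sum>f\<in>F. e (rideal f)) = 0"
        using xs(1) by simp
      then show "(\<Sum>f\<in>F. e (rideal f)) = 1" by simp
    qed
    ultimately show "proper_boundary_relations e \<and> core_relations v" by simp
  next
    assume h: "proper_boundary_relations e \<and> core_relations v"
    show "boundary_relations e"
      unfolding boundary_relations_def
    proof (intro allI impI)
      fix F :: "'m set" and xs assume F: "foundation_set F" and xs: "set xs = F"
      have ar: "\<forall>F::'m set. foundation_set F \<longrightarrow> (\<exists>F'. foundation_set F' \<and> accurate F' \<and> refines F' F)"
        using assms(2) unfolding property_AR_def .
      obtain F' where F': "foundation_set F'" "accurate F'" "refines F' F"
        using ar F by blast
      have h1: "proper_boundary_relations e" and h2: "core_relations v" using h by auto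
      have s1: "(\<Sum>f\<in>F'. e (rideal f)) = 1"
        by (rule li_accurate_sum[OF li dec h1 h2 F'(1,2)])
      have z: "prod_list (map (\<lambda>f. 1 - e (rideal f)) xs) * e (rideal g) = 0" if "g \<in> F'" for g
      proof -
        have "\<exists>f\<in>F. g \<in> rideal f" using bspec[OF F'(3)[unfolded refines_def] that] .
        then obtain f where f1: "f \<in> F" and f2: "g \<in> rideal f" ..
        from f1 xs have f3: "f \<in> set xs" by simp
        show ?thesis by (rule li_prod_zero[OF li f3 f2])
      qed
      have "prod_list (map (\<lambda>f. 1 - e (rideal f)) xs) * (\<Sum>f\<in>F'. e (rideal f))
          = (\<Sum>g\<in>F'. prod_list (map (\<lambda>f. 1 - e (rideal f)) xs) * e (rideal g))"
        by (rule sum_distrib_left)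
      also have "\<dots> = 0" using z by (intro sum.neutral) blast
      finally have "prod_list (map (\<lambda>f. 1 - e (rideal f)) xs) * (\<Sum>f\<in>F'. e (rideal f)) = 0" .
      then show "prod_list (map (\<lambda>f. 1 - e (rideal f)) xs) = 0" using s1 by simp
    qed
  qed
qed

end
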